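(* Let $n\ge3$, $\boldsymbol\ell$ positive lengths, $\mu,\tau^*\in\mathbb{R}$, and $\xi$, $N>0$ smooth functions on $T^n$ depending only on $s^1$, with $\int_{T^n}\xi N\,dV_{\boldsymbol\ell}=0$. Consider the CTS-H$^*$ conformal data set $(g_{\boldsymbol\ell},\mu\sigma^\flat_{\boldsymbol\ell},\tau^*,\xi,N)$. (1) If $\mu$ and $\tau^*$ are nonzero and have the same sign, there is a solution $(\phi,W)$ of the CTS-H$^*$ equations with $\phi\equiv c=(\mu/\tau^* )^{1/q}$, where $W$ is parallel to $\partial_{s^1}$ and $\frac1{2N}\mathcal{L}_{g_{\boldsymbol\ell}}W=c^{-q}\xi\,\sigma^\flat_{\boldsymbol\ell}$. The generated solution of the constraint equations is $$\bar g=g_{r\boldsymbol\ell},\qquad \bar K=\bar\tau\,(r\ell_1)^2(ds^1)^2,\qquad \bar\tau=\tau^*+c^{-2q}\xi,\qquad r=c^{(q-2)/2}=(\mu/\tau^* )^{1/n}.$$ (2) If $\mu=\tau^*=0$, then for every $c>0$ there is a solution $(\phi,W)$ of the CTS-H$^*$ equations with $\phi\equiv c$ and $\frac1{2N}\mathcal{L}_{g_{\boldsymbol\ell}}W=c^{-q}\xi\,\sigma^\flat_{\boldsymbol\ell}$, and the associated solution of the constraint equations is $\bar g=g_{r\boldsymbol\ell}$, $\bar K=\bar\tau\,(r\ell_1)^2(ds^1)^2$ with $\bar\tau=c^{-2q}\xi$ and $r=c^{(q-2)/2}$.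
   Context: $q=\frac{2n}{n-2}$, $\kappa=\frac{n-1}{n}$. $T^n=(\mathbb{R}/\mathbb{Z})^n$ with unit coordinates $(s^1,\ldots,s^n)$; $g_{\boldsymbol\ell}=\sum_k\ell_k^2(ds^k)^2$ with volume form $dV_{\boldsymbol\ell}$; $r\boldsymbol\ell=(r\ell_1,\ldots,r\ell_n)$; $\sigma^\flat_{\boldsymbol\ell}=\kappa\ell_1^2(ds^1)^2-\frac1n\sum_{k\ge2}\ell_k^2(ds^k)^2$ (transverse-traceless for $g_{\boldsymbol\ell}$). $\mathcal{L}_gW=L_Wg-\frac2n(\mathrm{div}_gW)g$. CTS-H$^*$ (lapse-scaled mean curvature) method: data $(g,\sigma,\tau^*,\xi,N)$ with $\sigma$ transverse-traceless, $\tau^*$ constant, $N>0$, $\int\xi N\,dV_g=0$. A solution of the CTS-H$^*$ equations is a pair $(\phi,W)$, $\phi>0$ a function and $W$ a vector field, such that $$\bar g=\phi^{q-2}g,\qquad \bar K=\phi^{-2}\Big(\sigma+\tfrac1{2N}\mathcal{L}_gW\Big)+\frac{\tau^*+\phi^{-2q}\xi}{n}\bar g$$ solves the Einstein constraint equations $R_{\bar g}-|\bar K|^2_{\bar g}+(\mathrm{tr}_{\bar g}\bar K)^2=0$, $\mathrm{div}_{\bar g}\bar K=d(\mathrm{tr}_{\bar g}\bar K)$; this $(\bar g,\bar K)$ is the generated solution. *)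

theory Defs
  imports "HOL-Analysis.Analysis"
begin

text \<open>The torus T^n = (R/Z)^n is modelled by Z^n-periodic objects on R^n = real^'n,
  in the unit coordinates s. Tensor fields are given by their coordinate components.\<close>

definition pd :: "'n::finite \<Rightarrow> (real^'n \<Rightarrow> real) \<Rightarrow> real^'n \<Rightarrow> real" where
  "pd k f x = deriv (\<lambda>t. f (x + t *\<^sub>R axis k 1)) 0"

fun pds :: "'n::finite list \<Rightarrow> (real^'n \<Rightarrow> real) \<Rightarrow> real^'n \<Rightarrow> real" where
  "pds [] f = f"
| "pds (k # ks) f = pd k (pds ks f)"

definition smooth_fn :: "(real^'n::finite \<Rightarrow> real) \<Rightarrow> bool" where
  "smooth_fn f \<longleftrightarrow> (\<forall>ks x. pds ks f differentiable (at x))"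

definition periodic_fn :: "(real^'n::finite \<Rightarrow> 'a) \<Rightarrow> bool" where
  "periodic_fn f \<longleftrightarrow> (\<forall>x k. f (x + axis k 1) = f x)"

definition only_coord :: "'n::finite \<Rightarrow> (real^'n \<Rightarrow> real) \<Rightarrow> bool" where
  "only_coord i1 f \<longleftrightarrow> (\<exists>h. \<forall>x. f x = h (x $ i1))"

definition q_of :: "nat \<Rightarrow> real" where
  "q_of n = 2 * real n / (real n - 2)"

definition kappa_of :: "nat \<Rightarrow> real" where
  "kappa_of n = (real n - 1) / real n"

definition ginv :: "(real^'n::finite \<Rightarrow> 'n \<Rightarrow> 'n \<Rightarrow> real) \<Rightarrow> real^'n \<Rightarrow> 'n \<Rightarrow> 'n \<Rightarrow> real" where
  "ginv g x i j = matrix_inv (\<chi> a b. g x a b) $ i $ j"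

definition christ :: "(real^'n::finite \<Rightarrow> 'n \<Rightarrow> 'n \<Rightarrow> real) \<Rightarrow> 'n \<Rightarrow> 'n \<Rightarrow> 'n \<Rightarrow> real^'n \<Rightarrow> real" where
  "christ g k i j x = (1/2) * (\<Sum>l\<in>UNIV. ginv g x k l *
      (pd i (\<lambda>y. g y j l) x + pd j (\<lambda>y. g y i l) x - pd l (\<lambda>y. g y i j) x))"

definition ricci :: "(real^'n::finite \<Rightarrow> 'n \<Rightarrow> 'n \<Rightarrow> real) \<Rightarrow> 'n \<Rightarrow> 'n \<Rightarrow> real^'n \<Rightarrow> real" where
  "ricci g i j x =
     (\<Sum>k\<in>UNIV. pd k (christ g k i j) x) - (\<Sum>k\<in>UNIV. pd j (christ g k i k) x)
     + (\<Sum>k\<in>UNIV. \<Sum>l\<in>UNIV. christ g k k l x * christ g l i j x)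
     - (\<Sum>k\<in>UNIV. \<Sum>l\<in>UNIV. christ g k j l x * christ g l i k x)"

definition scal :: "(real^'n::finite \<Rightarrow> 'n \<Rightarrow> 'n \<Rightarrow> real) \<Rightarrow> real^'n \<Rightarrow> real" where
  "scal g x = (\<Sum>i\<in>UNIV. \<Sum>j\<in>UNIV. ginv g x i j * ricci g i j x)"

definition trace_g :: "(real^'n::finite \<Rightarrow> 'n \<Rightarrow> 'n \<Rightarrow> real) \<Rightarrow> (real^'n \<Rightarrow> 'n \<Rightarrow> 'n \<Rightarrow> real) \<Rightarrow> real^'n \<Rightarrow> real" where
  "trace_g g K x = (\<Sum>i\<in>UNIV. \<Sum>j\<in>UNIV. ginv g x i j * K x i j)"

definition normsq_g :: "(real^'n::finite \<Rightarrow> 'n \<Rightarrow> 'n \<Rightarrow> real) \<Rightarrow> (real^'n \<Rightarrow> 'n \<Rightarrow> 'n \<Rightarrow> real) \<Rightarrow> real^'n \<Rightarrow> real" where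
  "normsq_g g K x = (\<Sum>i\<in>UNIV. \<Sum>j\<in>UNIV. \<Sum>a\<in>UNIV. \<Sum>b\<in>UNIV.
      ginv g x i a * ginv g x j b * K x i j * K x a b)"

definition covK :: "(real^'n::finite \<Rightarrow> 'n \<Rightarrow> 'n \<Rightarrow> real) \<Rightarrow> (real^'n \<Rightarrow> 'n \<Rightarrow> 'n \<Rightarrow> real) \<Rightarrow> 'n \<Rightarrow> 'n \<Rightarrow> 'n \<Rightarrow> real^'n \<Rightarrow> real" where
  "covK g K k i j x = pd k (\<lambda>y. K y i j) x
      - (\<Sum>l\<in>UNIV. christ g l k i x * K x l j) - (\<Sum>l\<in>UNIV. christ g l k j x * K x i l)"

definition divK :: "(real^'n::finite \<Rightarrow> 'n \<Rightarrow> 'n \<Rightarrow> real) \<Rightarrow> (real^'n \<Rightarrow> 'n \<Rightarrow> 'n \<Rightarrow> real) \<Rightarrow> 'n \<Rightarrow> real^'n \<Rightarrow> real" where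
  "divK g K j x = (\<Sum>i\<in>UNIV. \<Sum>k\<in>UNIV. ginv g x i k * covK g K k i j x)"

definition divW :: "(real^'n::finite \<Rightarrow> 'n \<Rightarrow> 'n \<Rightarrow> real) \<Rightarrow> (real^'n \<Rightarrow> real^'n) \<Rightarrow> real^'n \<Rightarrow> real" where
  "divW g W x = (\<Sum>k\<in>UNIV. pd k (\<lambda>y. W y $ k) x)
      + (\<Sum>k\<in>UNIV. \<Sum>l\<in>UNIV. christ g k k l x * W x $ l)"

definition lie_g :: "(real^'n::finite \<Rightarrow> 'n \<Rightarrow> 'n \<Rightarrow> real) \<Rightarrow> (real^'n \<Rightarrow> real^'n) \<Rightarrow> real^'n \<Rightarrow> 'n \<Rightarrow> 'n \<Rightarrow> real" where
  "lie_g g W x i j = (\<Sum>k\<in>UNIV. W x $ k * pd k (\<lambda>y. g y i j) x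
      + g x k j * pd i (\<lambda>y. W y $ k) x + g x i k * pd j (\<lambda>y. W y $ k) x)"

definition conf_killing :: "(real^'n::finite \<Rightarrow> 'n \<Rightarrow> 'n \<Rightarrow> real) \<Rightarrow> (real^'n \<Rightarrow> real^'n) \<Rightarrow> real^'n \<Rightarrow> 'n \<Rightarrow> 'n \<Rightarrow> real" where
  "conf_killing g W x i j = lie_g g W x i j - 2 / real CARD('n) * divW g W x * g x i j"

definition einstein_constraints :: "(real^'n::finite \<Rightarrow> 'n \<Rightarrow> 'n \<Rightarrow> real) \<Rightarrow> (real^'n \<Rightarrow> 'n \<Rightarrow> 'n \<Rightarrow> real) \<Rightarrow> bool" where
  "einstein_constraints g K \<longleftrightarrow>
     (\<forall>x. scal g x - normsq_g g K x + (trace_g g K x)^2 = 0) \<and>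
     (\<forall>x j. divK g K j x = pd j (trace_g g K) x)"

definition cts_gbar :: "(real^'n::finite \<Rightarrow> 'n \<Rightarrow> 'n \<Rightarrow> real) \<Rightarrow> (real^'n \<Rightarrow> real) \<Rightarrow> real^'n \<Rightarrow> 'n \<Rightarrow> 'n \<Rightarrow> real" where
  "cts_gbar g \<phi> x i j = \<phi> x powr (q_of CARD('n) - 2) * g x i j"

definition cts_Kbar :: "(real^'n::finite \<Rightarrow> 'n \<Rightarrow> 'n \<Rightarrow> real) \<Rightarrow> (real^'n \<Rightarrow> 'n \<Rightarrow> 'n \<Rightarrow> real) \<Rightarrow> real
     \<Rightarrow> (real^'n \<Rightarrow> real) \<Rightarrow> (real^'n \<Rightarrow> real) \<Rightarrow> (real^'n \<Rightarrow> real) \<Rightarrow> (real^'n \<Rightarrow> real^'n)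
     \<Rightarrow> real^'n \<Rightarrow> 'n \<Rightarrow> 'n \<Rightarrow> real" where
  "cts_Kbar g \<sigma> \<tau>s \<xi> N \<phi> W x i j =
     \<phi> x powr (-2) * (\<sigma> x i j + conf_killing g W x i j / (2 * N x))
     + (\<tau>s + \<phi> x powr (- 2 * q_of CARD('n)) * \<xi> x) / real CARD('n) * cts_gbar g \<phi> x i j"

definition cts_solution :: "(real^'n::finite \<Rightarrow> 'n \<Rightarrow> 'n \<Rightarrow> real) \<Rightarrow> (real^'n \<Rightarrow> 'n \<Rightarrow> 'n \<Rightarrow> real) \<Rightarrow> real
     \<Rightarrow> (real^'n \<Rightarrow> real) \<Rightarrow> (real^'n \<Rightarrow> real) \<Rightarrow> (real^'n \<Rightarrow> real) \<Rightarrow> (real^'n \<Rightarrow> real^'n) \<Rightarrow> bool" where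
  "cts_solution g \<sigma> \<tau>s \<xi> N \<phi> W \<longleftrightarrow>
     (\<forall>x. \<phi> x > 0) \<and> smooth_fn \<phi> \<and> periodic_fn \<phi> \<and>
     (\<forall>k. smooth_fn (\<lambda>x. W x $ k)) \<and> periodic_fn W \<and>
     einstein_constraints (cts_gbar g \<phi>) (cts_Kbar g \<sigma> \<tau>s \<xi> N \<phi> W)"

definition g_len :: "real^'n::finite \<Rightarrow> real^'n \<Rightarrow> 'n \<Rightarrow> 'n \<Rightarrow> real" where
  "g_len l x i j = (if i = j then (l $ i)^2 else 0)"

text \<open>sigma-flat, with distinguished first coordinate i1\<close>
definition sigma_flat :: "'n::finite \<Rightarrow> real^'n \<Rightarrow> real^'n \<Rightarrow> 'n \<Rightarrow> 'n \<Rightarrow> real" where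
  "sigma_flat i1 l x i j = (if i = j then
      (if i = i1 then kappa_of CARD('n) * (l $ i)^2 else - (1 / real CARD('n)) * (l $ i)^2) else 0)"

text \<open>integral over T^n against dV_g (fundamental domain [0,1]^n)\<close>
definition vol_int :: "(real^'n::finite \<Rightarrow> 'n \<Rightarrow> 'n \<Rightarrow> real) \<Rightarrow> (real^'n \<Rightarrow> real) \<Rightarrow> real" where
  "vol_int g f = integral (cbox 0 One) (\<lambda>x. f x * sqrt (det (\<chi> a b. g x a b)))"

end

theory Submission
  imports Defs
begin

definition sm :: "(real \<Rightarrow> real) \<Rightarrow> bool" where
  "sm F \<longleftrightarrow> (\<forall>m x. (deriv ^^ m) F differentiable at x)"

lemma dd: "F differentiable at x \<Longrightarrow> (F has_real_derivative deriv F x) (at x)"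
  using DERIV_deriv_iff_real_differentiable by blast

lemma dd2: "(F has_real_derivative D) (at x) \<Longrightarrow> F differentiable at x"
  using DERIV_deriv_iff_real_differentiable DERIV_imp_deriv by metis

lemma sm_diff: "sm F \<Longrightarrow> F differentiable at x"
  unfolding sm_def by (metis funpow_0)

lemma sm_deriv: "sm F \<Longrightarrow> sm (deriv F)"
  unfolding sm_def by (metis funpow_Suc_right o_apply)

lemma sm_const: "sm (\<lambda>t. c)"
proof -
  have "\<exists>d. (deriv ^^ m) (\<lambda>t::real. c) = (\<lambda>t. d)" for m
  proof (induction m)
    case (Suc m) then obtain d where "(deriv ^^ m) (\<lambda>t::real. c) = (\<lambda>t. d)" by blast
    then have "(deriv ^^ Suc m) (\<lambda>t::real. c) = (\<lambda>t. 0)" by simp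
    then show ?case by blast
  next
    case 0 show ?case by (rule exI[of _ c]) simp
  qed
  then show ?thesis unfolding sm_def by (metis dd2 DERIV_const)
qed

lemma deriv_funpow_add:
  fixes A B :: "real \<Rightarrow> real"
  assumes "\<And>j x. j < m \<Longrightarrow> (deriv ^^ j) A differentiable at x"
      and "\<And>j x. j < m \<Longrightarrow> (deriv ^^ j) B differentiable at x"
  shows "(deriv ^^ m) (\<lambda>t. A t + B t) = (\<lambda>t. (deriv ^^ m) A t + (deriv ^^ m) B t)"
  using assms
proof (induction m)
  case 0 then show ?case by simp
next
  case (Suc m)
  then have IH: "(deriv ^^ m) (\<lambda>t. A t + B t) = (\<lambda>t. (deriv ^^ m) A t + (deriv ^^ m) B t)" by simp
  have "(deriv ^^ Suc m) (\<lambda>t. A t + B t) = deriv (\<lambda>t. (deriv ^^ m) A t + (deriv ^^ m) B t)"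
    using IH by simp
  also have "\<dots> = (\<lambda>t. deriv ((deriv ^^ m) A) t + deriv ((deriv ^^ m) B) t)"
  proof
    fix t
    show "deriv (\<lambda>t. (deriv ^^ m) A t + (deriv ^^ m) B t) t = deriv ((deriv ^^ m) A) t + deriv ((deriv ^^ m) B) t"
      using dd[OF Suc.prems(1)[OF lessI]] dd[OF Suc.prems(2)[OF lessI]] by (intro DERIV_imp_deriv DERIV_add)
  qed
  finally show ?case by simp
qed

lemma sm_add: "sm A \<Longrightarrow> sm B \<Longrightarrow> sm (\<lambda>t. A t + B t)"
  unfolding sm_def
proof (intro allI)
  fix m x assume a: "\<forall>m x. (deriv ^^ m) A differentiable at x" "\<forall>m x. (deriv ^^ m) B differentiable at x"
  then have "(deriv ^^ m) (\<lambda>t. A t + B t) = (\<lambda>t. (deriv ^^ m) A t + (deriv ^^ m) B t)"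
    by (intro deriv_funpow_add) auto
  then show "(deriv ^^ m) (\<lambda>t. A t + B t) differentiable at x"
    using a by (simp add: differentiable_add)
qed

lemma sm_mult_aux: "\<forall>A B. sm A \<longrightarrow> sm B \<longrightarrow> (\<forall>x. (deriv ^^ m) (\<lambda>t. A t * B t) differentiable at x)"
proof (induction m rule: less_induct)
  case (less m)
  show ?case
  proof (cases m)
    case 0
    show ?thesis
    proof (intro allI impI)
      fix A B x assume A: "sm A" and B: "sm B"
      show "(deriv ^^ m) (\<lambda>t. A t * B t) differentiable at x"
        using 0 differentiable_mult[OF sm_diff[OF A] sm_diff[OF B]] by simp
    qed
  next
    case (Suc k)
    show ?thesis
    proof (intro allI impI)
      fix A B x assume A: "sm A" and B: "sm B"
      have dAB: "deriv (\<lambda>t. A t * B t) = (\<lambda>t. A t * deriv B t + deriv A t * B t)"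
      proof
        fix t show "deriv (\<lambda>t. A t * B t) t = A t * deriv B t + deriv A t * B t"
          using A B by (intro DERIV_imp_deriv) (auto intro!: derivative_eq_intros dd sm_diff)
      qed
      have s1: "sm (deriv B)" "sm (deriv A)" using A B by (auto intro: sm_deriv)
      have "(deriv ^^ k) (\<lambda>t. A t * deriv B t + deriv A t * B t) =
            (\<lambda>t. (deriv ^^ k) (\<lambda>t. A t * deriv B t) t + (deriv ^^ k) (\<lambda>t. deriv A t * B t) t)"
        apply (rule deriv_funpow_add)
        using less.IH[rule_format] A B s1 Suc by auto
      moreover have "(deriv ^^ k) (\<lambda>t. A t * deriv B t) differentiable at x"
                    "(deriv ^^ k) (\<lambda>t. deriv A t * B t) differentiable at x"
        using less.IH[rule_format] A B s1 Suc by auto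
      ultimately have "(deriv ^^ k) (\<lambda>t. A t * deriv B t + deriv A t * B t) differentiable at x"
        by (simp add: differentiable_add)
      then show "(deriv ^^ m) (\<lambda>t. A t * B t) differentiable at x"
        using dAB Suc by (simp add: funpow_Suc_right del: funpow.simps)
    qed
  qed
qed

lemma sm_mult: "sm A \<Longrightarrow> sm B \<Longrightarrow> sm (\<lambda>t. A t * B t)"
  using sm_mult_aux unfolding sm_def by blast

lemma sm_antider:
  assumes "sm h" "\<And>t. (W has_real_derivative h t) (at t)"
  shows "sm W"
  unfolding sm_def
proof (intro allI)
  fix m x
  have dW: "deriv W = h" using assms(2) by (intro ext DERIV_imp_deriv)
  show "(deriv ^^ m) W differentiable at x"
  proof (cases m)
    case 0 then show ?thesis using dd2[OF assms(2)] by simp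
  next
    case (Suc k)
    then show ?thesis using assms(1) dW unfolding sm_def by (simp add: funpow_Suc_right del: funpow.simps)
  qed
qed


lemma axis_scale: "axis i t = t *\<^sub>R (axis i 1 :: real^'n::finite)"
  by (simp add: vec_eq_iff axis_def)

lemma pd_comp:
  fixes D :: "real \<Rightarrow> real" and i k :: "'n::finite"
  assumes "D differentiable at (x$i)"
  shows "pd k (\<lambda>y. D (y$i)) x = (if k = i then deriv D (x$i) else 0)"
proof (cases "k = i")
  case True
  have e: "(\<lambda>t. D ((x + t *\<^sub>R axis k 1) $ i)) = (\<lambda>t. D (t + x$i))"
    using True by (simp add: axis_def add.commute)
  have "((\<lambda>t. D (t + x$i)) has_real_derivative deriv D (x$i)) (at 0)"
    using dd[OF assms] DERIV_shift[of D "deriv D (x$i)" 0 "x$i"] by simp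
  then show ?thesis unfolding pd_def e using True by (simp add: DERIV_imp_deriv)
next
  case False
  have e: "(\<lambda>t. D ((x + t *\<^sub>R axis k 1) $ i)) = (\<lambda>t. D (x$i))"
    using False by (simp add: axis_def)
  show ?thesis unfolding pd_def e using False by simp
qed

lemma pd_const: "pd k (\<lambda>y. c) x = 0"
  by (simp add: pd_def)

lemma coord_diff:
  fixes i :: "'n::finite"
  shows "sm G \<Longrightarrow> (\<lambda>x::real^'n. G (x$i)) differentiable at x"
  using differentiable_chain_at[of "\<lambda>x::real^'n. x$i" x G, OF bounded_linear_imp_differentiable[OF bounded_linear_vec_nth]] sm_diff[of G "x$i"]
  by (simp add: o_def)

lemma pds_coord:
  fixes i :: "'n::finite"
  assumes "sm G"
  shows "\<exists>H. sm H \<and> pds ks (\<lambda>x::real^'n. G (x$i)) = (\<lambda>x. H (x$i))"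
proof (induction ks)
  case Nil then show ?case using assms by auto
next
  case (Cons k ks)
  then obtain H where H: "sm H" "pds ks (\<lambda>x::real^'n. G (x$i)) = (\<lambda>x. H (x$i))" by blast
  have "pds (k # ks) (\<lambda>x::real^'n. G (x$i)) = (\<lambda>x. (if k = i then deriv H else (\<lambda>_. 0)) (x$i))"
  proof
    fix x :: "real^'n"
    have "pds (k # ks) (\<lambda>x::real^'n. G (x$i)) x = pd k (\<lambda>x. H (x$i)) x" using H(2) by simp
    also have "\<dots> = (if k = i then deriv H (x$i) else 0)" by (rule pd_comp[OF sm_diff[OF H(1)]])
    finally show "pds (k # ks) (\<lambda>x::real^'n. G (x$i)) x = (if k = i then deriv H else (\<lambda>_. 0)) (x$i)" by simp
  qed
  moreover have "sm (if k = i then deriv H else (\<lambda>_. 0))"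
    using H by (auto intro: sm_deriv sm_const)
  ultimately show ?case by blast
qed

lemma smooth_fn_coord:
  fixes i :: "'n::finite"
  shows "sm G \<Longrightarrow> smooth_fn (\<lambda>x::real^'n. G (x$i))"
  unfolding smooth_fn_def
proof (intro allI)
  fix ks and x :: "real^'n" assume G: "sm G"
  obtain H where H: "sm H" "pds ks (\<lambda>x::real^'n. G (x$i)) = (\<lambda>x. H (x$i))" using pds_coord[OF G] by blast
  show "pds ks (\<lambda>x::real^'n. G (x$i)) differentiable at x" unfolding H(2) by (rule coord_diff[OF H(1)])
qed

lemma comp_axis_diff:
  fixes i :: "'n::finite"
  assumes "(\<lambda>x::real^'n. G (x$i)) differentiable at (axis i t)"
  shows "G differentiable at t"
proof -
  have d: "(\<lambda>t. t *\<^sub>R (axis i 1 :: real^'n)) differentiable at t"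
    by (intro derivative_intros)
  have "(\<lambda>t. axis i t :: real^'n) differentiable at t" using d by (simp only: axis_scale[symmetric])
  from differentiable_chain_at[OF this, of "\<lambda>x::real^'n. G (x$i)"] assms
  show ?thesis by (simp add: o_def)
qed

lemma smooth_only_coord:
  fixes i :: "'n::finite" and f :: "real^'n \<Rightarrow> real"
  assumes sf: "smooth_fn f" and oc: "only_coord i f"
  shows "sm (\<lambda>t. f (axis i t))" "\<And>x. f x = f (axis i (x$i))"
proof -
  obtain h where h: "\<And>x. f x = h (x$i)" using oc unfolding only_coord_def by blast
  show fx: "\<And>x. f x = f (axis i (x$i))" using h by simp
  define F where "F = (\<lambda>t. f (axis i t))"
  have fF: "f = (\<lambda>x. F (x$i))" using fx unfolding F_def by auto
  have "pds (replicate m i) f = (\<lambda>x. (deriv ^^ m) F (x$i)) \<and> (\<forall>t. (deriv ^^ m) F differentiable at t)" for m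
  proof (induction m)
    case 0
    have "F differentiable at t" for t
    proof -
      have "pds [] f differentiable at (axis i t)" using sf unfolding smooth_fn_def by blast
      then have "(\<lambda>x. F (x$i)) differentiable at (axis i t)" using fF by simp
      then show ?thesis by (rule comp_axis_diff)
    qed
    then show ?case using fF by simp
  next
    case (Suc m)
    then have e0: "pds (replicate m i) f = (\<lambda>x. (deriv ^^ m) F (x$i))"
      and dif: "\<And>t. (deriv ^^ m) F differentiable at t" by auto
    have e: "pds (replicate (Suc m) i) f = (\<lambda>x. (deriv ^^ Suc m) F (x$i))"
    proof
      fix x
      have "pds (replicate (Suc m) i) f x = pd i (\<lambda>x. (deriv ^^ m) F (x$i)) x"
        using e0 by simp
      also have "\<dots> = deriv ((deriv ^^ m) F) (x$i)"
        by (subst pd_comp[OF dif]) simp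
      finally show "pds (replicate (Suc m) i) f x = (deriv ^^ Suc m) F (x$i)" by simp
    qed
    have "(deriv ^^ Suc m) F differentiable at t" for t
    proof -
      have "pds (replicate (Suc m) i) f differentiable at (axis i t)" using sf unfolding smooth_fn_def by blast
      then have "(\<lambda>x. (deriv ^^ Suc m) F (x$i)) differentiable at (axis i t)" using e by simp
      then show ?thesis by (rule comp_axis_diff)
    qed
    then show ?case using e by blast
  qed
  then show "sm (\<lambda>t. f (axis i t))" unfolding sm_def F_def[symmetric] by blast
qed


lemma if0_mult: "(if P then a else 0) * b = (if P then a * b else (0::real))" by simp
lemma mult_if0: "a * (if P then b else 0) = (if P then a * b else (0::real))" by simp
lemma if_conj0: "(if A \<and> B then X else 0) = (if A then (if B then X else 0) else (0::real))" by simp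
lemma sum_if_const: "(\<Sum>j\<in>S. if P then f j else 0) = (if P then (\<Sum>j\<in>S. f j) else (0::real))" by simp
lemmas ifsimps = if0_mult mult_if0 if_conj0 sum_if_const sum.delta sum.delta'

lemma ginv_diag:
  assumes m: "\<forall>k. m$k \<noteq> 0"
  shows "ginv (g_len m) x i j = (if i = j then 1/(m$i)^2 else 0)"
proof -
  define A where "A = (\<chi> a b. g_len m x a b)"
  define B :: "real^'a^'a" where "B = (\<chi> a b. if a = b then 1/(m$a)^2 else 0)"
  have e1: "(A ** B) $ i $ j = (if i = j then 1 else 0)" for i j
    unfolding matrix_matrix_mult_def A_def B_def g_len_def
    using m by (simp add: ifsimps)
  have e2: "(B ** A) $ i $ j = (if i = j then 1 else 0)" for i j
    unfolding matrix_matrix_mult_def A_def B_def g_len_def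
    using m by (simp add: ifsimps)
  have AB: "A ** B = mat 1" "B ** A = mat 1"
    by (simp_all add: vec_eq_iff mat_def e1 e2)
  define A' where "A' = matrix_inv A"
  have "A ** A' = mat 1 \<and> A' ** A = mat 1"
    unfolding A'_def matrix_inv_def by (rule someI[of _ B]) (simp add: AB)
  then have i1: "A' ** A = mat 1" by blast
  have "A' = A' ** mat 1" by (simp add: matrix_mul_rid)
  also have "\<dots> = A' ** (A ** B)" by (simp only: AB(1))
  also have "\<dots> = (A' ** A) ** B" by (simp only: matrix_mul_assoc)
  also have "\<dots> = B" by (simp add: i1 matrix_mul_lid)
  finally have "A' = B" .
  then show ?thesis unfolding ginv_def A_def[symmetric] A'_def[symmetric] B_def by simp
qed

lemma christ_flat: "christ (g_len m) k i j = (\<lambda>x. 0)"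
  by (rule ext) (simp add: christ_def g_len_def pd_const)

lemma ricci_flat: "ricci (g_len m) i j x = 0"
  by (simp add: ricci_def christ_flat pd_const)

lemma pd_if: "pd k (\<lambda>y. if P then f y else g y) x = (if P then pd k f x else pd k g x)"
  by (cases P) simp_all

lemma einstein_flat:
  fixes m :: "real^'n::finite" and i1 :: 'n and \<Theta> :: "real \<Rightarrow> real"
  assumes m: "\<forall>k. m$k \<noteq> 0" and th: "\<And>t. \<Theta> differentiable at t"
  shows "einstein_constraints (g_len m) (\<lambda>x i j. if i = i1 \<and> j = i1 then \<Theta> (x$i1) else 0)"
proof -
  let ?K = "\<lambda>(x::real^'n) i j. if i = i1 \<and> j = i1 then \<Theta> (x$i1) else 0"
  let ?a = "1 / (m$i1)^2"
  have gi: "\<And>x i j. ginv (g_len m) x i j = (if i = j then 1/(m$i)^2 else 0)"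
    using ginv_diag[OF m] by blast
  have scal0: "scal (g_len m) x = 0" for x by (simp add: scal_def ricci_flat)
  have tr: "trace_g (g_len m) ?K = (\<lambda>x. ?a * \<Theta> (x$i1))"
    by (rule ext) (simp add: trace_g_def gi ifsimps)
  have ns: "normsq_g (g_len m) ?K x = (?a * \<Theta> (x$i1))^2" for x
  proof -
    have sm: "ginv (g_len m) x i a * ginv (g_len m) x j b * ?K x i j * ?K x a b =
      (if i = i1 then if j = i1 then if a = i1 then if b = i1 then (?a * \<Theta> (x$i1))^2 else 0 else 0 else 0 else 0)" for i j a b
      by (simp add: gi power2_eq_square)
    show ?thesis unfolding normsq_g_def sm by (simp only: sum_if_const sum.delta sum.delta' if_True UNIV_I finite)
  qed
  have dk: "divK (g_len m) ?K j x = pd j (trace_g (g_len m) ?K) x" for j x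
  proof -
    have cov: "covK (g_len m) ?K k i j x = (if i = i1 \<and> j = i1 then (if k = i1 then deriv \<Theta> (x$i1) else 0) else 0)" for k i
      by (simp add: covK_def christ_flat pd_if pd_const pd_comp[OF th])
    have lhs: "divK (g_len m) ?K j x = (if j = i1 then ?a * deriv \<Theta> (x$i1) else 0)"
      unfolding divK_def cov by (simp add: gi ifsimps)
    have dth: "deriv (\<lambda>t. ?a * \<Theta> t) (x$i1) = ?a * deriv \<Theta> (x$i1)"
      by (intro DERIV_imp_deriv DERIV_cmult dd th)
    have "(\<lambda>t. ?a * \<Theta> t) differentiable at (x$i1)"
      by (rule dd2[OF DERIV_cmult[OF dd[OF th]]])
    then have rhs: "pd j (trace_g (g_len m) ?K) x = (if j = i1 then ?a * deriv \<Theta> (x$i1) else 0)"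
      unfolding tr using pd_comp[of "\<lambda>t. ?a * \<Theta> t" x i1 j] dth by simp
    show ?thesis using lhs rhs by simp
  qed
  show ?thesis unfolding einstein_constraints_def
  proof (intro conjI allI)
    fix x
    have "trace_g (g_len m) ?K x = ?a * \<Theta> (x$i1)" using tr by (rule fun_cong)
    then show "scal (g_len m) x - normsq_g (g_len m) ?K x + (trace_g (g_len m) ?K x)\<^sup>2 = 0"
      using scal0[of x] ns[of x] by (simp only:)
  next
    fix x j show "divK (g_len m) ?K j x = pd j (trace_g (g_len m) ?K) x" by (rule dk)
  qed
qed


lemma fubini_coord_nonneg:
  fixes h :: "real \<Rightarrow> real" and i :: "'n::finite"
  assumes hc: "continuous_on UNIV h" and hn: "\<And>t. 0 \<le> h t"
  shows "integral (cbox 0 (One::real^'n)) (\<lambda>x. h (x$i)) = integral {0..1} h"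
proof -
  define F where "F = (\<lambda>b::real^'n. if b = axis i 1 then (\<lambda>t. indicator {0..1} t * h t) else indicator {0..1::real})"
  have hm: "h \<in> borel_measurable borel"
    using hc by (simp add: borel_measurable_continuous_onI)
  have Fm: "\<And>b. b \<in> Basis \<Longrightarrow> F b \<in> borel_measurable borel"
    unfolding F_def using hm by auto
  have Fn: "\<And>b x. b \<in> Basis \<Longrightarrow> 0 \<le> F b x"
    unfolding F_def using hn by auto
  have pw: "(\<Prod>b\<in>Basis. F b (x \<bullet> b)) = indicator (cbox 0 One) x * h (x$i)" for x :: "real^'n"
  proof -
    have ab: "axis i 1 \<in> (Basis :: (real^'n) set)" by (simp add: Basis_vec_def) blast
    have "(\<Prod>b\<in>Basis. F b (x \<bullet> b)) = F (axis i 1) (x \<bullet> axis i 1) * (\<Prod>b\<in>Basis - {axis i 1}. F b (x \<bullet> b))"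
      using prod.remove[OF finite_Basis ab] by simp
    also have "(\<Prod>b\<in>Basis - {axis i 1}. F b (x \<bullet> b)) = (\<Prod>b\<in>Basis - {axis i 1}. indicator {0..1} (x \<bullet> b))"
      by (intro prod.cong) (auto simp: F_def)
    finally have e: "(\<Prod>b\<in>Basis. F b (x \<bullet> b)) = indicator {0..1} (x$i) * h (x$i) * (\<Prod>b\<in>Basis - {axis i 1}. indicator {0..1} (x \<bullet> b))"
      by (simp add: F_def inner_axis)
    show ?thesis
    proof (cases "x \<in> cbox 0 One")
      case True
      have ab: "axis i 1 \<in> (Basis :: (real^'n) set)" by (simp add: Basis_vec_def) blast
      from True have "\<forall>b\<in>Basis. x \<bullet> b \<in> {0..1}" by (auto simp: mem_box)
      moreover have "x$i \<in> {0..1}" using bspec[OF calculation ab] by (simp add: inner_axis)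
      ultimately show ?thesis using True e
        by (auto simp: mem_box inner_axis indicator_def intro!: prod.neutral)
    next
      case False
      then obtain b where b: "b \<in> Basis" "x \<bullet> b \<notin> {0..1}" by (auto simp: mem_box)
      show ?thesis
      proof (cases "b = axis i 1")
        case True then show ?thesis using e b False by (simp add: inner_axis)
      next
        case bf: False
        then have "(\<Prod>b\<in>Basis - {axis i 1}. indicator {0..1} (x \<bullet> b) :: real) = 0"
          using b by (intro prod_zero) (auto intro!: bexI[of _ b])
        then show ?thesis using e False by simp
      qed
    qed
  qed
  have ih: "(h has_integral integral {0..1} h) {0..1}"
    using hc by (intro integrable_integral integrable_continuous_real) (auto intro: continuous_on_subset)
  have I1: "(\<integral>\<^sup>+t. ennreal (indicator {0..1} t * h t) \<partial>lborel) = ennreal (integral {0..1} h)"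
    using nn_integral_has_integral_lebesgue[OF _ ih] hn by simp
  have I0: "(\<integral>\<^sup>+t. ennreal (indicator {0..1::real} t) \<partial>lborel) = 1"
    by (simp only: ennreal_indicator, subst nn_integral_indicator) simp_all
  have "(\<integral>\<^sup>+x. (\<Prod>b\<in>Basis. F b (x \<bullet> b)) \<partial>lborel) = (\<Prod>b\<in>Basis. (\<integral>\<^sup>+x. F b x \<partial>lborel))"
  proof -
    have "(\<integral>\<^sup>+x. ennreal (\<Prod>b\<in>Basis. F b (x \<bullet> b)) \<partial>lborel) = (\<integral>\<^sup>+x. (\<Prod>b\<in>Basis. ennreal (F b (x \<bullet> b))) \<partial>lborel)"
      using Fn by (intro nn_integral_cong) (simp add: prod_ennreal)
    also have "\<dots> = (\<Prod>b\<in>Basis. (\<integral>\<^sup>+x. ennreal (F b x) \<partial>lborel))"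
      by (rule nn_integral_lborel_prod) (use Fm in auto)
    finally show ?thesis .
  qed
  also have "\<dots> = ennreal (integral {0..1} h)"
  proof -
    have ab: "axis i 1 \<in> (Basis :: (real^'n) set)" by (simp add: Basis_vec_def) blast
    have "(\<Prod>b\<in>Basis. (\<integral>\<^sup>+x. F b x \<partial>lborel)) = (\<integral>\<^sup>+x. F (axis i 1) x \<partial>lborel) * (\<Prod>b\<in>Basis - {axis i 1}. (\<integral>\<^sup>+x. F b x \<partial>lborel))"
      using prod.remove[OF finite_Basis ab] by simp
    also have "(\<Prod>b\<in>Basis - {axis i 1}. (\<integral>\<^sup>+x. F b x \<partial>lborel)) = 1"
      using I0 by (intro prod.neutral) (auto simp: F_def)
    finally show ?thesis using I1 by (simp add: F_def)
  qed
  finally have N: "(\<integral>\<^sup>+x. ennreal (indicator (cbox 0 One) x * h (x$i)) \<partial>lborel) = ennreal (integral {0..1} h)"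
    by (simp add: pw)
  have "integral {0..1} h \<ge> 0" using hn by (simp add: integral_nonneg ih[THEN has_integral_integrable])
  have "((\<lambda>x::real^'n. indicator (cbox 0 One) x * h (x$i)) has_integral integral {0..1} h) UNIV"
  proof (rule nn_integral_has_integral[OF _ _ N])
    show "(\<lambda>x::real^'n. indicator (cbox 0 One) x * h (x$i)) \<in> borel_measurable borel"
      using hm by measurable
    show "0 \<le> indicator (cbox 0 One) x * h (x $ i)" for x :: "real^'n" using hn by simp
  qed fact
  then have "((\<lambda>x::real^'n. if x \<in> cbox 0 One then h (x$i) else 0) has_integral integral {0..1} h) UNIV"
    by (rule has_integral_eq[rotated]) (simp add: indicator_def)
  then have "((\<lambda>x::real^'n. h (x$i)) has_integral integral {0..1} h) (cbox 0 One)"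
    by (simp only: has_integral_restrict_UNIV)
  then show ?thesis by (rule integral_unique)
qed


lemma fubini_coord:
  fixes h :: "real \<Rightarrow> real" and i :: "'n::finite"
  assumes hc: "continuous_on UNIV h"
  shows "integral (cbox 0 (One::real^'n)) (\<lambda>x. h (x$i)) = integral {0..1} h"
proof -
  define hp where "hp = (\<lambda>t. max (h t) 0)"
  define hm where "hm = (\<lambda>t. max (- h t) 0)"
  have e: "h = (\<lambda>t. hp t - hm t)" unfolding hp_def hm_def by (rule ext) simp
  have cp: "continuous_on UNIV hp" unfolding hp_def using hc by (intro continuous_intros)
  have cm: "continuous_on UNIV hm" unfolding hm_def using hc by (intro continuous_intros)
  have ip: "integral (cbox 0 (One::real^'n)) (\<lambda>x. hp (x$i)) = integral {0..1} hp"
    by (rule fubini_coord_nonneg[OF cp]) (simp add: hp_def)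
  have im: "integral (cbox 0 (One::real^'n)) (\<lambda>x. hm (x$i)) = integral {0..1} hm"
    by (rule fubini_coord_nonneg[OF cm]) (simp add: hm_def)
  have cc: "continuous_on UNIV (\<lambda>x::real^'n. f (x$i))" if "continuous_on UNIV f" for f
    using continuous_on_compose[OF linear_continuous_on[OF bounded_linear_vec_nth] continuous_on_subset[OF that subset_UNIV]]
    by (simp add: o_def)
  have j1: "(\<lambda>x::real^'n. hp (x$i)) integrable_on cbox 0 One"
    using cc[OF cp] by (intro integrable_continuous) (auto intro: continuous_on_subset)
  have j2: "(\<lambda>x::real^'n. hm (x$i)) integrable_on cbox 0 One"
    using cc[OF cm] by (intro integrable_continuous) (auto intro: continuous_on_subset)
  have k1: "hp integrable_on {0..1}"
    using cp by (intro integrable_continuous_real) (auto intro: continuous_on_subset)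
  have k2: "hm integrable_on {0..1}"
    using cm by (intro integrable_continuous_real) (auto intro: continuous_on_subset)
  have "integral (cbox 0 (One::real^'n)) (\<lambda>x. h (x$i)) = integral (cbox 0 (One::real^'n)) (\<lambda>x. hp (x$i) - hm (x$i))"
    by (subst e) simp
  also have "\<dots> = integral {0..1} hp - integral {0..1} hm"
    using integral_diff[OF j1 j2] ip im by simp
  also have "\<dots> = integral {0..1} (\<lambda>t. hp t - hm t)"
    using integral_diff[OF k1 k2] by simp
  also have "\<dots> = integral {0..1} h" using e by simp
  finally show ?thesis .
qed


lemma axis_nth_if: "axis i v $ k = (if k = i then v else 0)"
  by (simp add: axis_def)

lemma vol_int_zero:
  fixes l :: "real^'n::finite"
  assumes l: "\<forall>k. l $ k > 0" and i: "vol_int (g_len l) f = 0"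
  shows "integral (cbox 0 One) f = 0"
proof -
  have d: "det (\<chi> a b. g_len l x a b) = (\<Prod>k\<in>UNIV. (l$k)^2)" for x
    by (subst det_diagonal) (auto simp: g_len_def)
  have pos: "(\<Prod>k\<in>UNIV. (l$k)^2) > 0" using l by (intro prod_pos) (metis less_irrefl zero_less_power2)
  define s where "s = sqrt (\<Prod>k\<in>UNIV. (l$k)^2)"
  have s: "s > 0" using pos by (simp add: s_def)
  have "integral (cbox 0 One) (\<lambda>x. f x * s) = 0"
    using i unfolding vol_int_def d s_def .
  then have "integral (cbox 0 One) f * s = 0" by simp
  then show ?thesis using s by simp
qed

lemma periodic_axis:
  fixes f :: "real^'n::finite \<Rightarrow> real"
  assumes "periodic_fn f"
  shows "f (axis i (t + 1)) = f (axis i t)"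
proof -
  have "axis i (t + 1) = axis i t + (axis i 1 :: real^'n)"
    by (simp add: vec_eq_iff axis_def)
  then show ?thesis using assms unfolding periodic_fn_def by metis
qed


lemma antider_part:
  fixes l :: "real^'n::finite" and i1 :: 'n and \<xi> N :: "real^'n \<Rightarrow> real"
  assumes lpos: "\<forall>k. l $ k > 0"
    and sx: "smooth_fn \<xi>" and px: "periodic_fn \<xi>" and ox: "only_coord i1 \<xi>"
    and sN: "smooth_fn N" and pN: "periodic_fn N" and oN: "only_coord i1 N"
    and int0: "vol_int (g_len l) (\<lambda>x. \<xi> x * N x) = 0"
  obtains h F where "sm h" "sm F" "\<And>x. \<xi> x * N x = h (x$i1)"
    "\<And>t. (F has_real_derivative h t) (at t)" "\<And>t. F (t + 1) = F t"
proof -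
  define \<xi>1 where "\<xi>1 = (\<lambda>t. \<xi> (axis i1 t))"
  define N1 where "N1 = (\<lambda>t. N (axis i1 t))"
  have s1: "sm \<xi>1" "sm N1" unfolding \<xi>1_def N1_def using smooth_only_coord sx ox sN oN by blast+
  have e1: "\<xi> x = \<xi>1 (x$i1)" "N x = N1 (x$i1)" for x
    unfolding \<xi>1_def N1_def using smooth_only_coord(2) sx ox sN oN by blast+
  define h where "h = (\<lambda>t. \<xi>1 t * N1 t)"
  have sh: "sm h" unfolding h_def using s1 by (rule sm_mult)
  have eh: "\<xi> x * N x = h (x$i1)" for x using e1 unfolding h_def by simp
  have hc: "continuous_on UNIV h"
    using sm_diff[OF sh] by (intro continuous_at_imp_continuous_on) (simp add: differentiable_imp_continuous_within)
  have hper: "h (t + 1) = h t" for t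
    unfolding h_def \<xi>1_def N1_def using periodic_axis[OF px] periodic_axis[OF pN] by simp
  obtain F where F: "\<And>x. (F has_vector_derivative h x) (at x)"
    using einterval_antiderivative[of "-\<infinity>" "\<infinity>" h] hc
    by (auto simp: continuous_on_eq_continuous_at)
  have Fd: "(F has_real_derivative h t) (at t)" for t
    using F by (simp add: has_real_derivative_iff_has_vector_derivative)
  have sF: "sm F" by (rule sm_antider[OF sh Fd])
  have i0: "integral {0..1} h = 0"
  proof -
    have "integral (cbox 0 One) (\<lambda>x::real^'n. \<xi> x * N x) = 0"
      by (rule vol_int_zero[OF lpos int0])
    then show ?thesis using fubini_coord[OF hc, of i1] eh by simp
  qed
  have "(h has_integral (F 1 - F 0)) {0..1}"
    by (rule fundamental_theorem_of_calculus) (auto intro: has_vector_derivative_at_within F)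
  then have F10: "F 1 - F 0 = 0" using i0 by (simp add: integral_unique)
  have Fp: "F (t + 1) = F t" for t
  proof -
    have "((\<lambda>t. F (t + 1) - F t) has_real_derivative 0) (at t)" for t
    proof -
      have a: "((\<lambda>t. F (t + 1)) has_real_derivative h (t + 1)) (at t)"
        using DERIV_shift[of F "h (t+1)" t 1] Fd by simp
      show ?thesis using DERIV_diff[OF a Fd[of t]] hper by simp
    qed
    then have "F (t + 1) - F t = F (0 + 1) - F 0" by (rule DERIV_isconst_all[rule_format])
    then show ?thesis using F10 by simp
  qed
  show ?thesis using that sh sF eh Fd Fp by blast
qed


lemma core:
  fixes l :: "real^'n::finite" and i1 :: 'n and \<mu> \<tau>s c :: real and \<xi> N :: "real^'n \<Rightarrow> real"
  assumes lpos: "\<forall>k. l $ k > 0"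
    and sx: "smooth_fn \<xi>" and px: "periodic_fn \<xi>" and ox: "only_coord i1 \<xi>"
    and sN: "smooth_fn N" and pN: "periodic_fn N" and oN: "only_coord i1 N" and Npos: "\<forall>x. N x > 0"
    and int0: "vol_int (g_len l) (\<lambda>x. \<xi> x * N x) = 0"
    and cpos: "c > 0" and mu: "\<mu> = \<tau>s * c powr q_of CARD('n)"
  shows "\<exists>W. (\<forall>x k. k \<noteq> i1 \<longrightarrow> W x $ k = 0) \<and>
             cts_solution (g_len l) (\<lambda>x i j. \<mu> * sigma_flat i1 l x i j) \<tau>s \<xi> N (\<lambda>x. c) W \<and>
             (\<forall>x i j. conf_killing (g_len l) W x i j / (2 * N x)
                        = c powr (- q_of CARD('n)) * \<xi> x * sigma_flat i1 l x i j) \<and>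
             cts_gbar (g_len l) (\<lambda>x. c) = g_len (c powr ((q_of CARD('n) - 2) / 2) *\<^sub>R l) \<and>
             cts_Kbar (g_len l) (\<lambda>x i j. \<mu> * sigma_flat i1 l x i j) \<tau>s \<xi> N (\<lambda>x. c) W
               = (\<lambda>x i j. if i = i1 \<and> j = i1
                    then (\<tau>s + c powr (- 2 * q_of CARD('n)) * \<xi> x) * (c powr ((q_of CARD('n) - 2) / 2) * l $ i1)^2 else 0)"
proof -
  obtain h F where sh: "sm h" and sF: "sm F" and eh: "\<And>x. \<xi> x * N x = h (x$i1)"
    and Fd: "\<And>t. (F has_real_derivative h t) (at t)" and Fp: "\<And>t. F (t + 1) = F t"
    using antider_part[OF lpos sx px ox sN pN oN int0] by blast
  define q where "q = q_of CARD('n)"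
  define n where "n = real CARD('n)"
  have npos: "n > 0" unfolding n_def by simp
  define P where "P = c powr q"
  define E where "E = c powr (-2)"
  define r where "r = c powr ((q - 2) / 2)"
  define C where "C = c powr (- q)"
  have Ppos: "P > 0" "E > 0" "r > 0" using cpos by (simp_all add: P_def E_def r_def)
  have CP: "C = inverse P" unfolding C_def P_def by (simp add: powr_minus)
  have C2: "c powr (- 2 * q) = inverse (P * P)"
    unfolding P_def using powr_minus[of c "q + q"] powr_add[of c q q] by (simp add: algebra_simps)
  have qE: "c powr (q - 2) = P * E"
    unfolding P_def E_def using powr_add[of c q "-2"] by simp
  have r2: "r^2 = P * E"
    unfolding r_def power2_eq_square qE[symmetric] powr_add[symmetric] by simp
  define w where "w = (\<lambda>t. C * F t)"
  define W where "W = (\<lambda>x::real^'n. axis i1 (w (x$i1)))"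
  have Wk: "W x $ k = (if k = i1 then w (x$i1) else 0)" for x k by (simp add: W_def axis_nth_if)
  have Wfun: "(\<lambda>y. W y $ k) = (\<lambda>y. (if k = i1 then w else (\<lambda>_. 0)) (y$i1))" for k
    by (rule ext) (simp add: Wk)
  have sw: "sm w" unfolding w_def using sm_mult[OF sm_const[of C] sF] by simp
  have swk: "sm (if k = i1 then w else (\<lambda>_. 0))" for k using sw sm_const by simp
  have dw: "deriv w t = C * h t" for t unfolding w_def by (intro DERIV_imp_deriv DERIV_cmult Fd)
  have dW: "pd i (\<lambda>y. W y $ k) x = (if k = i1 \<and> i = i1 then C * h (x$i1) else 0)" for i k x
  proof (cases "k = i1")
    case True
    then show ?thesis unfolding Wfun using dw by (simp add: pd_comp[OF sm_diff[OF sw]])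
  next
    case False
    then show ?thesis unfolding Wfun by (simp add: pd_const)
  qed
  have gc: "pd k (\<lambda>y. g_len l y i j) x = 0" for k i j x by (simp add: g_len_def pd_const)
  have lie: "lie_g (g_len l) W x i j = (if i = i1 \<and> j = i1 then 2 * (l$i1)^2 * (C * h (x$i1)) else 0)" for x i j
    unfolding lie_g_def gc dW by (simp add: g_len_def ifsimps sum.distrib)
  have divw: "divW (g_len l) W x = C * h (x$i1)" for x
    unfolding divW_def christ_flat dW by (simp add: ifsimps)
  have CK: "conf_killing (g_len l) W x i j = 2 * (C * h (x$i1)) * sigma_flat i1 l x i j" for x i j
    unfolding conf_killing_def lie divw n_def[symmetric] using npos
    by (auto simp: sigma_flat_def g_len_def kappa_of_def n_def[symmetric] field_simps)
  have CK2: "conf_killing (g_len l) W x i j / (2 * N x) = C * \<xi> x * sigma_flat i1 l x i j" for x i j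
    unfolding CK eh[symmetric] using Npos[rule_format, of x] by (simp add: field_simps)
  have GB: "cts_gbar (g_len l) (\<lambda>x. c) = g_len (r *\<^sub>R l)"
    by (intro ext) (simp add: cts_gbar_def g_len_def q_def[symmetric] qE power_mult_distrib r2)
  have KB: "cts_Kbar (g_len l) (\<lambda>x i j. \<mu> * sigma_flat i1 l x i j) \<tau>s \<xi> N (\<lambda>x. c) W
       = (\<lambda>x i j. if i = i1 \<and> j = i1 then (\<tau>s + c powr (- 2 * q) * \<xi> x) * (r * l $ i1)^2 else 0)"
  proof (intro ext)
    fix x i j
    have m: "\<mu> = \<tau>s * P" unfolding mu P_def q_def ..
    show "cts_Kbar (g_len l) (\<lambda>x i j. \<mu> * sigma_flat i1 l x i j) \<tau>s \<xi> N (\<lambda>x. c) W x i j =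
          (if i = i1 \<and> j = i1 then (\<tau>s + c powr (- 2 * q) * \<xi> x) * (r * l $ i1)^2 else 0)"
      unfolding cts_Kbar_def CK2 cts_gbar_def q_def[symmetric] n_def[symmetric] qE C2 CP m E_def[symmetric]
      using npos Ppos
      by (auto simp: sigma_flat_def g_len_def kappa_of_def n_def[symmetric] power_mult_distrib r2 field_simps)
  qed
  define \<xi>1 where "\<xi>1 = (\<lambda>t. \<xi> (axis i1 t))"
  have sx1: "sm \<xi>1" unfolding \<xi>1_def by (rule smooth_only_coord(1)[OF sx ox])
  have ex1: "\<xi> x = \<xi>1 (x$i1)" for x unfolding \<xi>1_def by (rule smooth_only_coord(2)[OF sx ox])
  define \<Theta> where "\<Theta> = (\<lambda>t. (\<tau>s + c powr (- 2 * q) * \<xi>1 t) * (r * l $ i1)^2)"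
  have sT: "sm \<Theta>" unfolding \<Theta>_def
    by (intro sm_mult sm_add sm_const sx1)
  have EC: "einstein_constraints (g_len (r *\<^sub>R l)) (\<lambda>x i j. if i = i1 \<and> j = i1 then \<Theta> (x$i1) else 0)"
  proof (rule einstein_flat)
    show "\<forall>k. (r *\<^sub>R l) $ k \<noteq> 0"
    proof
      fix k
      have "l$k > 0" using lpos by blast
      then show "(r *\<^sub>R l) $ k \<noteq> 0" using Ppos by simp
    qed
    show "\<Theta> differentiable at t" for t by (rule sm_diff[OF sT])
  qed
  have KB2: "cts_Kbar (g_len l) (\<lambda>x i j. \<mu> * sigma_flat i1 l x i j) \<tau>s \<xi> N (\<lambda>x. c) W
       = (\<lambda>x i j. if i = i1 \<and> j = i1 then \<Theta> (x$i1) else 0)"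
    unfolding KB \<Theta>_def ex1 ..
  have sol: "cts_solution (g_len l) (\<lambda>x i j. \<mu> * sigma_flat i1 l x i j) \<tau>s \<xi> N (\<lambda>x. c) W"
    unfolding cts_solution_def
  proof (intro conjI allI)
    show "0 < c" by (rule cpos)
    show "smooth_fn (\<lambda>x::real^'n. c)" using smooth_fn_coord[where G="\<lambda>_. c" and i=i1, OF sm_const] by simp
    show "periodic_fn (\<lambda>x::real^'n. c)" by (simp add: periodic_fn_def)
    show "smooth_fn (\<lambda>x. W x $ k)" for k unfolding Wfun by (rule smooth_fn_coord[OF swk])
    show "periodic_fn W" unfolding periodic_fn_def
    proof (intro allI)
      fix x :: "real^'n" and k
      show "W (x + axis k 1) = W x"
      proof (cases "k = i1")
        case True
        then show ?thesis by (simp add: W_def w_def axis_nth_if Fp)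
      next
        case False
        then show ?thesis by (simp add: W_def axis_nth_if)
      qed
    qed
    show "einstein_constraints (cts_gbar (g_len l) (\<lambda>x. c))
        (cts_Kbar (g_len l) (\<lambda>x i j. \<mu> * sigma_flat i1 l x i j) \<tau>s \<xi> N (\<lambda>x. c) W)"
      unfolding GB KB2 by (rule EC)
  qed
  show ?thesis
    unfolding q_def[symmetric]
    apply (rule exI[of _ W])
    using sol CK2 GB KB Wk unfolding C_def r_def by auto
qed


theorem proposition7p1:
  fixes l :: "real^'n::finite" and i1 :: 'n and \<mu> \<tau>s :: real and \<xi> N :: "real^'n \<Rightarrow> real"
  assumes "CARD('n) \<ge> 3"
    and "\<forall>k. l $ k > 0"
    and "smooth_fn \<xi>" and "periodic_fn \<xi>" and "only_coord i1 \<xi>"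
    and "smooth_fn N" and "periodic_fn N" and "only_coord i1 N" and "\<forall>x. N x > 0"
    and "vol_int (g_len l) (\<lambda>x. \<xi> x * N x) = 0"
  shows
   "(\<mu> \<noteq> 0 \<and> \<tau>s \<noteq> 0 \<and> sgn \<mu> = sgn \<tau>s \<longrightarrow>
      (let c = (\<mu> / \<tau>s) powr (1 / q_of CARD('n));
           r = c powr ((q_of CARD('n) - 2) / 2) in
        r = (\<mu> / \<tau>s) powr (1 / real CARD('n)) \<and>
        (\<exists>W. (\<forall>x k. k \<noteq> i1 \<longrightarrow> W x $ k = 0) \<and>
             cts_solution (g_len l) (\<lambda>x i j. \<mu> * sigma_flat i1 l x i j) \<tau>s \<xi> N (\<lambda>x. c) W \<and>
             (\<forall>x i j. conf_killing (g_len l) W x i j / (2 * N x)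
                        = c powr (- q_of CARD('n)) * \<xi> x * sigma_flat i1 l x i j) \<and>
             cts_gbar (g_len l) (\<lambda>x. c) = g_len (r *\<^sub>R l) \<and>
             cts_Kbar (g_len l) (\<lambda>x i j. \<mu> * sigma_flat i1 l x i j) \<tau>s \<xi> N (\<lambda>x. c) W
               = (\<lambda>x i j. if i = i1 \<and> j = i1
                    then (\<tau>s + c powr (- 2 * q_of CARD('n)) * \<xi> x) * (r * l $ i1)^2 else 0))))
    \<and>
    (\<mu> = 0 \<and> \<tau>s = 0 \<longrightarrow>
      (\<forall>c > 0. let r = c powr ((q_of CARD('n) - 2) / 2) in
        (\<exists>W. cts_solution (g_len l) (\<lambda>x i j. \<mu> * sigma_flat i1 l x i j) \<tau>s \<xi> N (\<lambda>x. c) W \<and>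
             (\<forall>x i j. conf_killing (g_len l) W x i j / (2 * N x)
                        = c powr (- q_of CARD('n)) * \<xi> x * sigma_flat i1 l x i j) \<and>
             cts_gbar (g_len l) (\<lambda>x. c) = g_len (r *\<^sub>R l) \<and>
             cts_Kbar (g_len l) (\<lambda>x i j. \<mu> * sigma_flat i1 l x i j) \<tau>s \<xi> N (\<lambda>x. c) W
               = (\<lambda>x i j. if i = i1 \<and> j = i1
                    then (c powr (- 2 * q_of CARD('n)) * \<xi> x) * (r * l $ i1)^2 else 0))))"
proof -
  define q where "q = q_of CARD('n)"
  define n where "n = real CARD('n)"
  have n3: "n \<ge> 3" using assms(1) unfolding n_def by simp
  have qv: "q = 2 * n / (n - 2)" unfolding q_def n_def q_of_def ..
  have qpos: "q > 0" using n3 unfolding qv by (simp add: field_simps)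
  note A = assms(2-10)
  have case1: "\<mu> \<noteq> 0 \<and> \<tau>s \<noteq> 0 \<and> sgn \<mu> = sgn \<tau>s \<longrightarrow>
      (let c = (\<mu> / \<tau>s) powr (1 / q_of CARD('n));
           r = c powr ((q_of CARD('n) - 2) / 2) in
        r = (\<mu> / \<tau>s) powr (1 / real CARD('n)) \<and>
        (\<exists>W. (\<forall>x k. k \<noteq> i1 \<longrightarrow> W x $ k = 0) \<and>
             cts_solution (g_len l) (\<lambda>x i j. \<mu> * sigma_flat i1 l x i j) \<tau>s \<xi> N (\<lambda>x. c) W \<and>
             (\<forall>x i j. conf_killing (g_len l) W x i j / (2 * N x)
                        = c powr (- q_of CARD('n)) * \<xi> x * sigma_flat i1 l x i j) \<and>
             cts_gbar (g_len l) (\<lambda>x. c) = g_len (r *\<^sub>R l) \<and>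
             cts_Kbar (g_len l) (\<lambda>x i j. \<mu> * sigma_flat i1 l x i j) \<tau>s \<xi> N (\<lambda>x. c) W
               = (\<lambda>x i j. if i = i1 \<and> j = i1
                    then (\<tau>s + c powr (- 2 * q_of CARD('n)) * \<xi> x) * (r * l $ i1)^2 else 0)))"
  proof (intro impI)
    assume H: "\<mu> \<noteq> 0 \<and> \<tau>s \<noteq> 0 \<and> sgn \<mu> = sgn \<tau>s"
    have pos: "0 < \<mu> / \<tau>s"
      using H by (cases "\<mu> > 0"; cases "\<tau>s > 0") (auto simp: sgn_if divide_neg_neg split: if_splits)
    define c where "c = (\<mu> / \<tau>s) powr (1 / q)"
    have cpos: "c > 0" unfolding c_def using pos H by simp
    have cq: "c powr q = \<mu> / \<tau>s" unfolding c_def powr_powr using qpos pos by simp (metis abs_divide abs_of_pos)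
    have mu: "\<mu> = \<tau>s * c powr q_of CARD('n)" unfolding q_def[symmetric] cq using H by simp
    have ex: "1 / q * ((q - 2) / 2) = 1 / n" unfolding qv using n3 by (simp add: field_simps)
    have req: "c powr ((q - 2) / 2) = (\<mu> / \<tau>s) powr (1 / n)"
      unfolding c_def powr_powr ex ..
    from core[OF A cpos mu] req
    show "(let c = (\<mu> / \<tau>s) powr (1 / q_of CARD('n));
           r = c powr ((q_of CARD('n) - 2) / 2) in
        r = (\<mu> / \<tau>s) powr (1 / real CARD('n)) \<and>
        (\<exists>W. (\<forall>x k. k \<noteq> i1 \<longrightarrow> W x $ k = 0) \<and>
             cts_solution (g_len l) (\<lambda>x i j. \<mu> * sigma_flat i1 l x i j) \<tau>s \<xi> N (\<lambda>x. c) W \<and>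
             (\<forall>x i j. conf_killing (g_len l) W x i j / (2 * N x)
                        = c powr (- q_of CARD('n)) * \<xi> x * sigma_flat i1 l x i j) \<and>
             cts_gbar (g_len l) (\<lambda>x. c) = g_len (r *\<^sub>R l) \<and>
             cts_Kbar (g_len l) (\<lambda>x i j. \<mu> * sigma_flat i1 l x i j) \<tau>s \<xi> N (\<lambda>x. c) W
               = (\<lambda>x i j. if i = i1 \<and> j = i1
                    then (\<tau>s + c powr (- 2 * q_of CARD('n)) * \<xi> x) * (r * l $ i1)^2 else 0)))"
      unfolding c_def q_def n_def Let_def by blast
  qed
  have case2: "\<mu> = 0 \<and> \<tau>s = 0 \<longrightarrow>
      (\<forall>c > 0. let r = c powr ((q_of CARD('n) - 2) / 2) in
        (\<exists>W. cts_solution (g_len l) (\<lambda>x i j. \<mu> * sigma_flat i1 l x i j) \<tau>s \<xi> N (\<lambda>x. c) W \<and>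
             (\<forall>x i j. conf_killing (g_len l) W x i j / (2 * N x)
                        = c powr (- q_of CARD('n)) * \<xi> x * sigma_flat i1 l x i j) \<and>
             cts_gbar (g_len l) (\<lambda>x. c) = g_len (r *\<^sub>R l) \<and>
             cts_Kbar (g_len l) (\<lambda>x i j. \<mu> * sigma_flat i1 l x i j) \<tau>s \<xi> N (\<lambda>x. c) W
               = (\<lambda>x i j. if i = i1 \<and> j = i1
                    then (c powr (- 2 * q_of CARD('n)) * \<xi> x) * (r * l $ i1)^2 else 0)))"
  proof (intro impI allI)
    fix c :: real
    assume H: "\<mu> = 0 \<and> \<tau>s = 0" and cpos: "0 < c"
    have mu: "\<mu> = \<tau>s * c powr q_of CARD('n)" using H by simp
    from core[OF A cpos mu] H
    show "let r = c powr ((q_of CARD('n) - 2) / 2) in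
        (\<exists>W. cts_solution (g_len l) (\<lambda>x i j. \<mu> * sigma_flat i1 l x i j) \<tau>s \<xi> N (\<lambda>x. c) W \<and>
             (\<forall>x i j. conf_killing (g_len l) W x i j / (2 * N x)
                        = c powr (- q_of CARD('n)) * \<xi> x * sigma_flat i1 l x i j) \<and>
             cts_gbar (g_len l) (\<lambda>x. c) = g_len (r *\<^sub>R l) \<and>
             cts_Kbar (g_len l) (\<lambda>x i j. \<mu> * sigma_flat i1 l x i j) \<tau>s \<xi> N (\<lambda>x. c) W
               = (\<lambda>x i j. if i = i1 \<and> j = i1
                    then (c powr (- 2 * q_of CARD('n)) * \<xi> x) * (r * l $ i1)^2 else 0))"
      unfolding Let_def by (simp only: add_0_left) blast
  qed
  show ?thesis using case1 case2 by blast
qed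


end
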